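(* Let $\mathcal C=\{c_1,\ldots,c_m\}$ and let $n\ge 6(m-2)$. Suppose the manipulator has no information, i.e. the information set is $E=\mathcal F_n$, the set of all $n$-profiles of linear orders on $\mathcal C$. Then every positional scoring rule (with ties broken in the order $c_1\succ\cdots\succ c_m$) is immune to dominating manipulation: for every linear order $V_M$ on $\mathcal C$, no linear order $U$ on $\mathcal C$ dominates $V_M$.
   Context: A positional scoring rule is given by a scoring vector $(s(1),\ldots,s(m))$ of integers with $s(1)\ge s(2)\ge\cdots\ge s(m)$; each vote gives $s(i)$ points to the alternative in its $i$-th position, and the alternative with the highest total wins, ties broken in favor of smallest index. There are $n$ non-manipulators and one manipulator with true preferences $V_M$. Given an information set $E$ (set of $n$-profiles of the non-manipulators), a vote $U$ dominates a vote $V$ if for every $P\in E$, $r(P\cup\{U\})$ is ranked weakly above $r(P\cup\{V\})$ in $V_M$, and for some $P'\in E$ strictly above. Immunity means that for every $V_M$ no vote dominates $V_M$. *)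

theory Defs
  imports Main
begin

text \<open>Alternatives c_1,...,c_m are encoded as the naturals 0,...,m-1 (c_(i+1) is i).
  A linear order on the alternatives is a list enumerating them, best first.\<close>

definition linord :: "nat \<Rightarrow> nat list \<Rightarrow> bool" where
  "linord m V \<longleftrightarrow> distinct V \<and> set V = {..<m}"

text \<open>0-based position of x in the list (length of list if absent).\<close>
fun pos :: "nat list \<Rightarrow> nat \<Rightarrow> nat" where
  "pos [] x = 0"
| "pos (y # ys) x = (if y = x then 0 else Suc (pos ys x))"

definition scoring_vector :: "nat \<Rightarrow> (nat \<Rightarrow> int) \<Rightarrow> bool" where
  "scoring_vector m s \<longleftrightarrow> (\<forall>i j. 1 \<le> i \<longrightarrow> i \<le> j \<longrightarrow> j \<le> m \<longrightarrow> s j \<le> s i)"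

definition points :: "(nat \<Rightarrow> int) \<Rightarrow> nat list \<Rightarrow> nat \<Rightarrow> int" where
  "points s V a = s (pos V a + 1)"

definition total_score :: "(nat \<Rightarrow> int) \<Rightarrow> nat list list \<Rightarrow> nat \<Rightarrow> int" where
  "total_score s P a = (\<Sum>V\<leftarrow>P. points s V a)"

definition winner :: "nat \<Rightarrow> (nat \<Rightarrow> int) \<Rightarrow> nat list list \<Rightarrow> nat" where
  "winner m s P = (LEAST a. a < m \<and> (\<forall>b<m. total_score s P b \<le> total_score s P a))"

text \<open>The set F_n of all n-profiles (of the non-manipulators).\<close>
definition profiles :: "nat \<Rightarrow> nat \<Rightarrow> nat list list set" where
  "profiles m n = {P. length P = n \<and> (\<forall>V\<in>set P. linord m V)}"

definition weakly_above :: "nat list \<Rightarrow> nat \<Rightarrow> nat \<Rightarrow> bool" where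
  "weakly_above VM x y \<longleftrightarrow> pos VM x \<le> pos VM y"

definition strictly_above :: "nat list \<Rightarrow> nat \<Rightarrow> nat \<Rightarrow> bool" where
  "strictly_above VM x y \<longleftrightarrow> pos VM x < pos VM y"

definition dominates :: "nat \<Rightarrow> (nat \<Rightarrow> int) \<Rightarrow> nat list list set \<Rightarrow> nat list \<Rightarrow> nat list \<Rightarrow> nat list \<Rightarrow> bool" where
  "dominates m s E VM U V \<longleftrightarrow>
     (\<forall>P\<in>E. weakly_above VM (winner m s (U # P)) (winner m s (V # P))) \<and>
     (\<exists>P\<in>E. strictly_above VM (winner m s (U # P)) (winner m s (V # P)))"

end

theory Submission
  imports Defs
begin


lemma pos_lt: "x \<in> set V \<Longrightarrow> pos V x < length V"
  by (induction V) auto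

lemma pos_nth: "distinct V \<Longrightarrow> i < length V \<Longrightarrow> pos V (V ! i) = i"
proof (induction V arbitrary: i)
  case Nil then show ?case by simp
next
  case (Cons y ys) then show ?case by (cases i) auto
qed

lemma nth_pos: "x \<in> set V \<Longrightarrow> V ! pos V x = x"
  by (induction V) auto

lemma pos_map: "inj f \<Longrightarrow> pos (map f V) (f x) = pos V x"
  by (induction V) (auto simp: inj_eq)

lemma pos_hd_filter: "c \<in> set V \<Longrightarrow> P c \<Longrightarrow> pos V (hd (filter P V)) \<le> pos V c"
  by (induction V) auto

lemma hd_filter_in: "c \<in> set V \<Longrightarrow> P c \<Longrightarrow> hd (filter P V) \<in> set V \<and> P (hd (filter P V))"
  by (induction V) auto

lemma linord_len: "linord m V \<Longrightarrow> length V = m"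
  unfolding linord_def by (metis card_lessThan distinct_card)

lemma linord_pos: "linord m V \<Longrightarrow> x < m \<Longrightarrow> pos V x < m"
  using pos_lt linord_len unfolding linord_def by fastforce

lemma sv_mono: "scoring_vector m s \<Longrightarrow> 1 \<le> i \<Longrightarrow> i \<le> j \<Longrightarrow> j \<le> m \<Longrightarrow> s j \<le> s i"
  unfolding scoring_vector_def by blast

lemma pts_ge: "scoring_vector m s \<Longrightarrow> linord m V \<Longrightarrow> x < m \<Longrightarrow> s m \<le> points s V x"
  unfolding points_def using linord_pos[of m V x] sv_mono[of m s "pos V x + 1" m] by simp

lemma pts_le: "scoring_vector m s \<Longrightarrow> linord m V \<Longrightarrow> x < m \<Longrightarrow> 1 \<le> j \<Longrightarrow> j \<le> pos V x + 1 \<Longrightarrow> points s V x \<le> s j"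
  unfolding points_def using linord_pos[of m V x] sv_mono[of m s j "pos V x + 1"] by simp

lemma pts_mono: "scoring_vector m s \<Longrightarrow> linord m V \<Longrightarrow> x < m \<Longrightarrow> y < m \<Longrightarrow> pos V x \<le> pos V y \<Longrightarrow> points s V y \<le> points s V x"
  unfolding points_def using linord_pos[of m V y] sv_mono[of m s "pos V x + 1" "pos V y + 1"] by simp

lemma linord_map: "linord m V \<Longrightarrow> inj f \<Longrightarrow> (\<forall>x<m. f x < m) \<Longrightarrow> linord m (map f V)"
proof -
  assume a: "linord m V" "inj f" "\<forall>x<m. f x < m"
  have "f ` {..<m} = {..<m}"
    by (rule endo_inj_surj) (use a in \<open>auto intro: inj_on_subset\<close>)
  then show ?thesis using a unfolding linord_def
    by (auto simp: distinct_map intro: inj_on_subset)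
qed

lemma pts_map: "inj f \<Longrightarrow> f x = y \<Longrightarrow> points s (map f V) y = points s V x"
  unfolding points_def using pos_map by metis

lemma ts_cons: "total_score s (V # P) x = points s V x + total_score s P x"
  by (simp add: total_score_def)

lemma ts_append: "total_score s (P @ Q) x = total_score s P x + total_score s Q x"
  by (simp add: total_score_def)

lemma ts_nil: "total_score s [] x = 0"
  by (simp add: total_score_def)

lemma sum_points: assumes "linord m V" shows "(\<Sum>c<m. points s V c) = (\<Sum>i<m. s (i+1))"
proof -
  have d: "distinct V" and l: "length V = m" and st: "set V = {..<m}"
    using assms linord_len unfolding linord_def by auto
  have im: "(nth V) ` {..<m} = {..<m}" using st l by (auto simp: set_conv_nth)
  have inj: "inj_on (nth V) {..<m}" using d l by (auto intro: inj_on_nth)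
  have "(\<Sum>i<m. s (i+1)) = (\<Sum>i<m. points s V (V!i))"
    using pos_nth[OF d] l by (auto simp: points_def intro!: sum.cong)
  also have "\<dots> = (\<Sum>c\<in>(nth V) ` {..<m}. points s V c)"
    using sum.reindex[OF inj, of "points s V"] by simp
  finally show ?thesis using im by simp
qed

lemma winnerI:
  assumes "a < m" "\<forall>c<m. total_score s Q c \<le> total_score s Q a"
    "\<forall>c<a. total_score s Q c < total_score s Q a"
  shows "winner m s Q = a"
  unfolding winner_def
proof (rule Least_equality)
  show "a < m \<and> (\<forall>b<m. total_score s Q b \<le> total_score s Q a)" using assms by auto
next
  fix y assume "y < m \<and> (\<forall>b<m. total_score s Q b \<le> total_score s Q y)"
  then show "a \<le> y" using assms by (meson leD not_le_imp_less)
qed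



definition pr :: "nat \<Rightarrow> nat \<Rightarrow> nat list \<Rightarrow> nat \<Rightarrow> nat list list" where
  "pr a b R t = [a#b#rotate t R, b#a#rotate t R]"

definition PP :: "nat \<Rightarrow> nat \<Rightarrow> nat list \<Rightarrow> nat \<Rightarrow> nat list list" where
  "PP a b R N = concat (map (pr a b R) [0..<N])"

lemma ts_PP: "total_score s (PP a b R N) x =
   (\<Sum>t<N. points s (a#b#rotate t R) x + points s (b#a#rotate t R) x)"
  by (induction N) (simp_all add: PP_def pr_def ts_append ts_cons ts_nil)

lemma len_PP: "length (PP a b R N) = 2 * N"
  by (induction N) (simp_all add: PP_def pr_def)

lemma set_PP: "V \<in> set (PP a b R N) \<Longrightarrow> \<exists>t. V = a#b#rotate t R \<or> V = b#a#rotate t R"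
  by (auto simp: PP_def pr_def)

lemma pts_top: "points s (x#X) x = s 1"
  by (simp add: points_def)

lemma pts_snd: "x \<noteq> y \<Longrightarrow> points s (x#y#X) y = s 2"
  by (simp add: points_def numeral_2_eq_2)

lemma pts_rest: "c \<noteq> x \<Longrightarrow> c \<noteq> y \<Longrightarrow> points s (x#y#X) c = s (pos X c + 3)"
  by (simp add: points_def numeral_3_eq_3)

lemma margin:
  assumes sv: "scoring_vector m s" and d: "distinct R" and l: "length R + 2 = m"
    and c: "c \<in> set R" and N: "2 * length R \<le> N"
  shows "(\<Sum>t<N. 2 * s (pos (rotate t R) c + 3)) + 2 * (s 1 + s 2 - 2 * s m)
          \<le> (\<Sum>t<N. s 1 + s 2)"
proof -
  define k where "k = length R"
  have k1: "k \<ge> 1" using c k_def by (cases R) auto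
  define g where "g t = s 1 + s 2 - 2 * s (pos (rotate t R) c + 3)" for t
  have g0: "0 \<le> g t" for t
  proof -
    have "pos (rotate t R) c < k" using pos_lt[of c "rotate t R"] c k_def by simp
    then have "s (pos (rotate t R) c + 3) \<le> s 2" "s 2 \<le> s 1"
      using sv_mono[OF sv, of 2 "pos (rotate t R) c + 3"] sv_mono[OF sv, of 1 2] l k_def by auto
    then show ?thesis unfolding g_def by simp
  qed
  define i where "i = pos R c"
  have ik: "i < k" and Ri: "R ! i = c" using pos_lt[OF c] nth_pos[OF c] i_def k_def by auto
  define t0 where "t0 = (i + 1) mod k"
  have t0k: "t0 < k" using k1 t0_def by simp
  have "(t0 + (k - 1)) mod k = i"
  proof -
    have "(t0 + (k - 1)) mod k = ((i + 1) + (k - 1)) mod k" unfolding t0_def by (simp add: mod_add_left_eq)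
    also have "\<dots> = (i + k) mod k" using k1 by simp
    also have "\<dots> = i" using ik by simp
    finally show ?thesis .
  qed
  then have "rotate t0 R ! (k - 1) = c" using nth_rotate[of "k - 1" R t0] k1 k_def Ri by simp
  then have p0: "pos (rotate t0 R) c = k - 1"
    using pos_nth[of "rotate t0 R" "k - 1"] d k1 k_def by simp
  have rr: "rotate (t0 + k) R = rotate t0 R"
    using rotate_conv_mod[of "t0 + k" R] rotate_conv_mod[of t0 R] k_def by simp
  have e: "k - 1 + 3 = m" using l k_def k1 by simp
  have gt0: "g t0 = s 1 + s 2 - 2 * s m" unfolding g_def p0 e by simp
  have gt1: "g (t0 + k) = s 1 + s 2 - 2 * s m" using gt0 rr unfolding g_def by simp
  have sub: "{t0, t0 + k} \<subseteq> {..<N}" using t0k N k_def by auto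
  have "g t0 + g (t0 + k) = (\<Sum>t\<in>{t0, t0+k}. g t)" using k1 by simp
  also have "\<dots> \<le> (\<Sum>t<N. g t)" by (rule sum_mono2) (use sub g0 in auto)
  finally have "2 * (s 1 + s 2 - 2 * s m) \<le> (\<Sum>t<N. g t)" using gt0 gt1 by simp
  moreover have "(\<Sum>t<N. g t) = (\<Sum>t<N. s 1 + s 2) - (\<Sum>t<N. 2 * s (pos (rotate t R) c + 3))"
    unfolding g_def by (simp add: sum_subtractf)
  ultimately show ?thesis by simp
qed



lemma finish:
  assumes sv: "scoring_vector m s" and VM: "linord m VM" and U: "linord m U"
    and ab: "a < m" "b < m" "a \<noteq> b"
    and Dv: "\<forall>v\<in>set Dv. linord m v"
    and N: "length Dv + 2 * N = n"
    and NN: "3 \<le> m \<Longrightarrow> 2 * (m - 2) \<le> N"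
    and c1: "total_score s Dv b - total_score s Dv a + points s VM b - points s VM a < 0 \<or>
             (total_score s Dv b - total_score s Dv a + points s VM b - points s VM a = 0 \<and> a < b)"
    and c2: "total_score s Dv b - total_score s Dv a + points s U b - points s U a > 0 \<or>
             (total_score s Dv b - total_score s Dv a + points s U b - points s U a = 0 \<and> b < a)"
    and br: "\<forall>c<m. c \<noteq> a \<longrightarrow> c \<noteq> b \<longrightarrow> s m - s 1 \<le> total_score s Dv a - total_score s Dv c
               \<and> s m - s 1 \<le> total_score s Dv b - total_score s Dv c"
    and pa: "points s VM a = s 1" and pb: "points s U b > points s VM b"
  shows "\<exists>P\<in>profiles m n. winner m s (VM # P) = a \<and> winner m s (U # P) = b"
proof -
  define R where "R = filter (\<lambda>x. x \<noteq> a \<and> x \<noteq> b) [0..<m]"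
  have dR: "distinct R" and sR: "set R = {..<m} - {a, b}" unfolding R_def by auto
  have lR: "length R + 2 = m"
  proof -
    have "length R = card ({..<m} - {a, b})" using distinct_card[OF dR] sR by simp
    also have "\<dots> = m - 2" using ab by (subst card_Diff_subset) auto
    finally show ?thesis using ab by simp
  qed
  define P where "P = Dv @ PP a b R N"
  have lin1: "linord m (a#b#rotate t R)" "linord m (b#a#rotate t R)" for t
    using dR sR ab unfolding linord_def by auto
  have prof: "P \<in> profiles m n"
    unfolding profiles_def P_def using N Dv lin1 len_PP[of a b R N]
    by (auto dest!: set_PP)
  define TD where "TD x = total_score s Dv x" for x
  define TP where "TP x = total_score s (PP a b R N) x" for x
  have tot: "total_score s (V # P) x = points s V x + TD x + TP x" for V x
    unfolding P_def TD_def TP_def by (simp add: ts_cons ts_append)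
  have TPa: "TP a = (\<Sum>t<N. s 1 + s 2)"
    unfolding TP_def ts_PP using ab by (simp add: pts_top pts_snd)
  have TPb: "TP b = (\<Sum>t<N. s 1 + s 2)"
    unfolding TP_def ts_PP using ab by (simp add: pts_top pts_snd add.commute)
  have s1m: "s m < s 1"
    using pb pts_ge[OF sv VM ab(2)] pts_le[OF sv U ab(2), of 1] by simp
  have others: "TP a - TP c \<ge> 2 * (s 1 + s 2 - 2 * s m) \<and> s m \<le> s 2"
    if c: "c < m" "c \<noteq> a" "c \<noteq> b" for c
  proof -
    have cR: "c \<in> set R" using sR c by auto
    then have m3: "3 \<le> m" using lR by (cases R) auto
    have "TP c = (\<Sum>t<N. 2 * s (pos (rotate t R) c + 3))"
      unfolding TP_def ts_PP using c by (simp add: pts_rest)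
    moreover have "(\<Sum>t<N. 2 * s (pos (rotate t R) c + 3)) + 2 * (s 1 + s 2 - 2 * s m)
          \<le> (\<Sum>t<N. s 1 + s 2)"
      by (rule margin[OF sv dR lR cR]) (use NN m3 lR in auto)
    moreover have "s m \<le> s 2" using sv_mono[OF sv, of 2 m] m3 by simp
    ultimately show ?thesis using TPa by simp
  qed
  have pUb: "points s U b \<le> s 1" using pts_le[OF sv U ab(2), of 1] by simp
  have pVMb: "s m \<le> points s VM b" using pts_ge[OF sv VM ab(2)] .
  have w1: "winner m s (VM # P) = a"
  proof (rule winnerI)
    show "a < m" by fact
    show "\<forall>c<m. total_score s (VM # P) c \<le> total_score s (VM # P) a"
    proof (intro allI impI)
      fix c assume c: "c < m"
      show "total_score s (VM # P) c \<le> total_score s (VM # P) a"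
      proof (cases "c = a \<or> c = b")
        case True then show ?thesis using c1 TPa TPb unfolding tot TD_def by auto
      next
        case False
        then have "TP a - TP c \<ge> 2 * (s 1 + s 2 - 2 * s m)" "s m \<le> s 2" using others c by auto
        moreover have "points s VM c \<le> s 1" using pts_le[OF sv VM c, of 1] by simp
        moreover have "s m - s 1 \<le> TD a - TD c" using br c False unfolding TD_def by auto
        ultimately show ?thesis unfolding tot using pa s1m by (smt (verit))
      qed
    qed
    show "\<forall>c<a. total_score s (VM # P) c < total_score s (VM # P) a"
    proof (intro allI impI)
      fix c assume c: "c < a"
      then have cm: "c < m" using ab by simp
      show "total_score s (VM # P) c < total_score s (VM # P) a"
      proof (cases "c = b")
        case True then show ?thesis using c1 c TPa TPb unfolding tot TD_def by auto
      next
        case False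
        then have "TP a - TP c \<ge> 2 * (s 1 + s 2 - 2 * s m)" "s m \<le> s 2" using others cm c by auto
        moreover have "points s VM c \<le> s 1" using pts_le[OF sv VM cm, of 1] by simp
        moreover have "s m - s 1 \<le> TD a - TD c" using br cm c False unfolding TD_def by auto
        ultimately show ?thesis unfolding tot using pa s1m by (smt (verit))
      qed
    qed
  qed
  have w2: "winner m s (U # P) = b"
  proof (rule winnerI)
    show "b < m" by fact
    show "\<forall>c<m. total_score s (U # P) c \<le> total_score s (U # P) b"
    proof (intro allI impI)
      fix c assume c: "c < m"
      show "total_score s (U # P) c \<le> total_score s (U # P) b"
      proof (cases "c = a \<or> c = b")
        case True then show ?thesis using c2 TPa TPb unfolding tot TD_def by auto
      next
        case False
        then have "TP b - TP c \<ge> 2 * (s 1 + s 2 - 2 * s m)" "s m \<le> s 2" using others c TPa TPb by auto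
        moreover have "points s U c \<le> s 1" using pts_le[OF sv U c, of 1] by simp
        moreover have "s m - s 1 \<le> TD b - TD c" using br c False unfolding TD_def by auto
        ultimately show ?thesis unfolding tot using pb pVMb s1m by (smt (verit))
      qed
    qed
    show "\<forall>c<b. total_score s (U # P) c < total_score s (U # P) b"
    proof (intro allI impI)
      fix c assume c: "c < b"
      then have cm: "c < m" using ab by simp
      show "total_score s (U # P) c < total_score s (U # P) b"
      proof (cases "c = a")
        case True then show ?thesis using c2 c TPa TPb unfolding tot TD_def by auto
      next
        case False
        then have "TP b - TP c \<ge> 2 * (s 1 + s 2 - 2 * s m)" "s m \<le> s 2" using others cm c TPa TPb by auto
        moreover have "points s U c \<le> s 1" using pts_le[OF sv U cm, of 1] by simp
        moreover have "s m - s 1 \<le> TD b - TD c" using br cm c False unfolding TD_def by auto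
        ultimately show ?thesis unfolding tot using pb pVMb s1m by (smt (verit))
      qed
    qed
  qed
  show ?thesis using prof w1 w2 by blast
qed



definition sw :: "nat \<Rightarrow> nat \<Rightarrow> nat \<Rightarrow> nat" where
  "sw a b x = (if x = a then b else if x = b then a else x)"

definition cyc :: "nat \<Rightarrow> nat \<Rightarrow> nat \<Rightarrow> nat \<Rightarrow> nat" where
  "cyc x y z w = (if w = x then y else if w = y then z else if w = z then x else w)"

lemma inj_sw: "inj (sw a b)"
  by (auto simp: inj_def sw_def split: if_splits)

lemma inj_cyc: "x \<noteq> y \<Longrightarrow> y \<noteq> z \<Longrightarrow> x \<noteq> z \<Longrightarrow> inj (cyc x y z)"
  by (auto simp: inj_def cyc_def split: if_splits)

lemma pos_inj: "x \<in> set V \<Longrightarrow> y \<in> set V \<Longrightarrow> pos V x = pos V y \<Longrightarrow> x = y"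
  by (metis nth_pos)

lemma pts_range: "scoring_vector m s \<Longrightarrow> linord m V \<Longrightarrow> x < m \<Longrightarrow> y < m \<Longrightarrow>
   s m - s 1 \<le> points s V x - points s V y"
  using pts_ge[of m s V x] pts_le[of m s V y 1] by simp

lemma construct:
  assumes sv: "scoring_vector m s" and n: "n \<ge> 6 * (m - 2)"
    and VM: "linord m VM" and U: "linord m U"
    and ab: "a < m" "b < m" "a \<noteq> b"
    and hp: "pos VM a = 0" and pb: "points s U b > points s VM b"
  shows "\<exists>P\<in>profiles m n. winner m s (VM # P) = a \<and> winner m s (U # P) = b"
proof -
  have pa: "points s VM a = s 1" using hp by (simp add: points_def)
  define V where "V = (if a < b then VM else U)"
  have LV: "linord m V" using VM U V_def by simp
  have pUa: "points s U a \<le> s 1" using pts_le[OF sv U ab(1), of 1] by simp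
  have cc: "(points s V a - points s V b) + points s VM b - points s VM a < 0 \<or>
             ((points s V a - points s V b) + points s VM b - points s VM a = 0 \<and> a < b)"
           "(points s V a - points s V b) + points s U b - points s U a > 0 \<or>
             ((points s V a - points s V b) + points s U b - points s U a = 0 \<and> b < a)"
    using pa pb pUa ab unfolding V_def by auto
  have setm: "\<And>x. x \<in> set W \<longleftrightarrow> x < m" if "linord m W" for W
    using that unfolding linord_def by auto
  show ?thesis
  proof (cases "odd n")
    case True
    define V1 where "V1 = map (sw a b) V"
    have L1: "linord m V1" unfolding V1_def
      by (rule linord_map[OF LV inj_sw]) (use ab in \<open>auto simp: sw_def\<close>)
    have p1: "points s V1 b = points s V a" "points s V1 a = points s V b"
      unfolding V1_def using ab by (simp_all add: pts_map[OF inj_sw] sw_def)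
    show ?thesis
    proof (rule finish[OF sv VM U ab, of "[V1]" "(n - 1) div 2"])
      show "\<forall>v\<in>set [V1]. linord m v" using L1 by simp
      show "length [V1] + 2 * ((n - 1) div 2) = n" using True by (simp; presburger?)
      show "3 \<le> m \<Longrightarrow> 2 * (m - 2) \<le> (n - 1) div 2" using n True by presburger
      show "total_score s [V1] b - total_score s [V1] a + points s VM b - points s VM a < 0 \<or>
        (total_score s [V1] b - total_score s [V1] a + points s VM b - points s VM a = 0 \<and> a < b)"
        using cc(1) p1 by (simp add: ts_cons ts_nil)
      show "total_score s [V1] b - total_score s [V1] a + points s U b - points s U a > 0 \<or>
        (total_score s [V1] b - total_score s [V1] a + points s U b - points s U a = 0 \<and> b < a)"
        using cc(2) p1 by (simp add: ts_cons ts_nil)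
      show "\<forall>c<m. c \<noteq> a \<longrightarrow> c \<noteq> b \<longrightarrow> s m - s 1 \<le> total_score s [V1] a - total_score s [V1] c
               \<and> s m - s 1 \<le> total_score s [V1] b - total_score s [V1] c"
        using pts_range[OF sv L1] ab by (simp add: ts_cons ts_nil)
    qed (use pa pb in auto)
  next
    case even: False
    show ?thesis
    proof (cases "m = 2")
      case True
      have two: "\<forall>c<m. c = a \<or> c = b" using True ab by presburger
      have ps: "pos W x < 2" if "linord m W" "x < m" for W x using linord_pos[OF that] True by simp
      have "VM ! pos VM b = b" "VM ! pos VM a = a" using nth_pos setm[OF VM] ab by auto
      then have "pos VM b = 1" using ps[OF VM ab(2)] hp ab by (cases "pos VM b") auto
      then have pVMb: "points s VM b = s 2" by (simp add: points_def numeral_2_eq_2)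
      have pUb1: "pos U b = 0"
      proof (rule ccontr)
        assume "pos U b \<noteq> 0"
        then have "pos U b = 1" using ps[OF U ab(2)] by simp
        then show False using pb pVMb by (simp add: points_def numeral_2_eq_2)
      qed
      have "pos U a \<noteq> pos U b" using pos_inj[of a U b] setm[OF U] ab by auto
      then have "pos U a = 1" using pUb1 ps[OF U ab(1)] by simp
      then have pUa2: "points s U a = s 2" and pUb2: "points s U b = s 1"
        using pUb1 by (simp_all add: points_def numeral_2_eq_2)
      show ?thesis
      proof (rule finish[OF sv VM U ab, of "[]" "n div 2"])
        show "length [] + 2 * (n div 2) = n" using even by simp
        show "total_score s [] b - total_score s [] a + points s VM b - points s VM a < 0 \<or>
          (total_score s [] b - total_score s [] a + points s VM b - points s VM a = 0 \<and> a < b)"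
          using pa pVMb pb pUb2 by (simp add: ts_nil)
        show "total_score s [] b - total_score s [] a + points s U b - points s U a > 0 \<or>
          (total_score s [] b - total_score s [] a + points s U b - points s U a = 0 \<and> b < a)"
          using pUa2 pUb2 pb pVMb by (simp add: ts_nil)
      qed (use pa pb True ab two in auto)
    next
      case m2: False
      have m3: "3 \<le> m" using m2 ab by linarith
      obtain c where c: "c < m" "c \<noteq> a" "c \<noteq> b"
      proof -
        have "\<exists>c\<in>{0,1,2::nat}. c \<noteq> a \<and> c \<noteq> b" by auto
        then obtain c where "c \<in> {0,1,2::nat}" "c \<noteq> a" "c \<noteq> b" by blast
        moreover have "c < m" using calculation(1) m3 by auto
        ultimately show ?thesis using that by blast
      qed
      define Q where "Q = (\<lambda>x. x \<noteq> a \<and> x \<noteq> b)"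
      define c0 where "c0 = hd (filter Q V)"
      have cV: "c \<in> set V" using setm[OF LV] c by auto
      have c0: "c0 \<in> set V" "c0 \<noteq> a" "c0 \<noteq> b"
        using hd_filter_in[OF cV, of Q] c unfolding c0_def Q_def by auto
      have c0m: "c0 < m" using c0 setm[OF LV] by auto
      have best: "points s V x \<le> points s V c0" if "x < m" "x \<noteq> a" "x \<noteq> b" for x
      proof -
        have "x \<in> set V" using setm[OF LV] that by auto
        then have "pos V c0 \<le> pos V x" using pos_hd_filter[of x V Q] that unfolding c0_def Q_def by auto
        then show ?thesis using pts_mono[OF sv LV c0m that(1)] by simp
      qed
      define f1 where "f1 = cyc a b c0"
      define f2 where "f2 = cyc c0 b a"
      have i1: "inj f1" unfolding f1_def using inj_cyc c0 ab by auto
      have i2: "inj f2" unfolding f2_def using inj_cyc c0 ab by auto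
      define V1 where "V1 = map f1 V"
      define V2 where "V2 = map f2 V"
      have L1: "linord m V1" unfolding V1_def
        by (rule linord_map[OF LV i1]) (use ab c0m in \<open>auto simp: f1_def cyc_def\<close>)
      have L2: "linord m V2" unfolding V2_def
        by (rule linord_map[OF LV i2]) (use ab c0m in \<open>auto simp: f2_def cyc_def\<close>)
      have q1: "points s V1 b = points s V a" "points s V1 c0 = points s V b"
          "points s V1 a = points s V c0"
      proof -
        have e1: "f1 a = b" "f1 b = c0" "f1 c0 = a" unfolding f1_def cyc_def using ab c0 by auto
        show "points s V1 b = points s V a" "points s V1 c0 = points s V b"
          "points s V1 a = points s V c0"
          unfolding V1_def using pts_map[OF i1 e1(1)] pts_map[OF i1 e1(2)] pts_map[OF i1 e1(3)] by auto
      qed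
      have q2: "points s V2 b = points s V c0" "points s V2 a = points s V b"
          "points s V2 c0 = points s V a"
      proof -
        have e2: "f2 c0 = b" "f2 b = a" "f2 a = c0" unfolding f2_def cyc_def using ab c0 by auto
        show "points s V2 b = points s V c0" "points s V2 a = points s V b"
          "points s V2 c0 = points s V a"
          unfolding V2_def using pts_map[OF i2 e2(1)] pts_map[OF i2 e2(2)] pts_map[OF i2 e2(3)] by auto
      qed
      have q3: "points s V1 x = points s V x" "points s V2 x = points s V x"
        if "x \<noteq> a" "x \<noteq> b" "x \<noteq> c0" for x
      proof -
        have "f1 x = x" "f2 x = x" unfolding f1_def f2_def cyc_def using that by auto
        then show "points s V1 x = points s V x" "points s V2 x = points s V x"
          unfolding V1_def V2_def using pts_map[OF i1] pts_map[OF i2] by auto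
      qed
      have TD: "total_score s [V1, V2] x = points s V1 x + points s V2 x" for x
        by (simp add: ts_cons ts_nil)
      show ?thesis
      proof (rule finish[OF sv VM U ab, of "[V1, V2]" "(n - 2) div 2"])
        show "\<forall>v\<in>set [V1, V2]. linord m v" using L1 L2 by simp
        show "length [V1, V2] + 2 * ((n - 2) div 2) = n" using even n m3 by (simp; presburger?)
        show "3 \<le> m \<Longrightarrow> 2 * (m - 2) \<le> (n - 2) div 2" using n m3 by presburger
        show "total_score s [V1, V2] b - total_score s [V1, V2] a + points s VM b - points s VM a < 0 \<or>
          (total_score s [V1, V2] b - total_score s [V1, V2] a + points s VM b - points s VM a = 0 \<and> a < b)"
          using cc(1) q1 q2 unfolding TD by simp
        show "total_score s [V1, V2] b - total_score s [V1, V2] a + points s U b - points s U a > 0 \<or>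
          (total_score s [V1, V2] b - total_score s [V1, V2] a + points s U b - points s U a = 0 \<and> b < a)"
          using cc(2) q1 q2 unfolding TD by simp
        show "\<forall>x<m. x \<noteq> a \<longrightarrow> x \<noteq> b \<longrightarrow> s m - s 1 \<le> total_score s [V1, V2] a - total_score s [V1, V2] x
               \<and> s m - s 1 \<le> total_score s [V1, V2] b - total_score s [V1, V2] x"
        proof (intro allI impI)
          fix x assume x: "x < m" "x \<noteq> a" "x \<noteq> b"
          have r: "s m - s 1 \<le> points s V y - points s V z" if "y < m" "z < m" for y z
            using pts_range[OF sv LV that] .
          show "s m - s 1 \<le> total_score s [V1, V2] a - total_score s [V1, V2] x
               \<and> s m - s 1 \<le> total_score s [V1, V2] b - total_score s [V1, V2] x"
          proof (cases "x = c0")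
            case True
            then show ?thesis unfolding TD using q1 q2 r[OF c0m ab(1)] r[OF c0m ab(2)] by simp
          next
            case False
            then show ?thesis unfolding TD using q1 q2 q3[OF x(2,3) False] best[OF x]
                r[OF ab(2) x(1)] r[OF ab(1) x(1)] by simp
          qed
        qed
      qed (use pa pb in auto)
    qed
  qed
qed



lemma winner_cong:
  assumes "\<forall>x<m. points s U x = points s V x"
  shows "winner m s (U # P) = winner m s (V # P)"
proof -
  have "(\<lambda>a. a < m \<and> (\<forall>b<m. total_score s (U # P) b \<le> total_score s (U # P) a)) =
        (\<lambda>a. a < m \<and> (\<forall>b<m. total_score s (V # P) b \<le> total_score s (V # P) a))"
    using assms by (auto simp: ts_cons)
  then show ?thesis unfolding winner_def by simp
qed

theorem theorem3:
  fixes m n :: nat and s :: "nat \<Rightarrow> int"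
  assumes "n \<ge> 6 * (m - 2)"
    and "scoring_vector m s"
  shows "\<forall>VM U. linord m VM \<longrightarrow> linord m U \<longrightarrow> \<not> dominates m s (profiles m n) VM U VM"
proof (intro allI impI notI)
  fix VM U
  assume VM: "linord m VM" and U: "linord m U" and dom: "dominates m s (profiles m n) VM U VM"
  note sv = assms(2)
  have weak: "\<And>P. P \<in> profiles m n \<Longrightarrow> pos VM (winner m s (U # P)) \<le> pos VM (winner m s (VM # P))"
    using dom unfolding dominates_def weakly_above_def by blast
  obtain P0 where "P0 \<in> profiles m n" and st: "pos VM (winner m s (U # P0)) < pos VM (winner m s (VM # P0))"
    using dom unfolding dominates_def strictly_above_def by blast
  have "\<exists>c<m. points s U c \<noteq> points s VM c"
  proof (rule ccontr)
    assume "\<not> ?thesis"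
    then have "winner m s (U # P0) = winner m s (VM # P0)" by (intro winner_cong) auto
    then show False using st by simp
  qed
  then obtain c where c: "c < m" "points s U c \<noteq> points s VM c" by blast
  define f where "f x = points s U x - points s VM x" for x
  have sumf: "(\<Sum>x<m. f x) = 0"
    unfolding f_def sum_subtractf using sum_points[OF U] sum_points[OF VM] by simp
  have setm: "\<And>x. x \<in> set W \<longleftrightarrow> x < m" if "linord m W" for W
    using that unfolding linord_def by auto
  have lVM: "length VM = m" using linord_len[OF VM] .
  have m0: "0 < m" using c by simp
  define a where "a = VM ! 0"
  have am: "a < m" using setm[OF VM, of "VM!0"] nth_mem[of 0 VM] lVM m0 unfolding a_def by simp
  have hp: "pos VM a = 0" unfolding a_def using pos_nth[of VM 0] VM lVM m0 unfolding linord_def by simp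
  have pa: "points s VM a = s 1" using hp by (simp add: points_def)
  have fa: "f a \<le> 0" unfolding f_def pa using pts_le[OF sv U am, of 1] by simp
  obtain b where b: "b < m" "f b > 0"
  proof (rule ccontr)
    assume "\<not> thesis"
    have nn: "\<forall>x<m. 0 \<le> - f x"
    proof (intro allI impI)
      fix x assume "x < m"
      then have "\<not> f x > 0" using that \<open>\<not> thesis\<close> by blast
      then show "0 \<le> - f x" by simp
    qed
    have "(\<Sum>x<m. - f x) = 0" using sumf by (simp add: sum_negf)
    then have "\<forall>x\<in>{..<m}. - f x = 0" using sum_nonneg_eq_0_iff[of "{..<m}" "\<lambda>x. - f x"] nn by auto
    then show False using c unfolding f_def by auto
  qed
  have ab: "a \<noteq> b" using fa b by auto
  have pb: "points s U b > points s VM b" using b unfolding f_def by simp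
  obtain P where P: "P \<in> profiles m n" "winner m s (VM # P) = a" "winner m s (U # P) = b"
    using construct[OF sv assms(1) VM U am b(1) ab hp pb] by blast
  have "pos VM b \<le> pos VM a" using weak[OF P(1)] P by simp
  then have "pos VM b = 0" using hp by simp
  then have "b = a" using nth_pos[of b VM] setm[OF VM, of b] b(1) unfolding a_def by simp
  then show False using ab by simp
qed

end
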